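(* Let $k\in\mathbb N$ with $k\geq 3$. Then: (i) $f_{i,j}(n)+1=f_{i,j-1}(n)$ for all $n\in\mathbb N$ and all integers $i,j$ with $k-3\leq i\leq k-2$ and $-F(i+1)\geq j\geq 2-F(k)$; (ii) $f_{k-3,1-F(k)}(a(n))+1=f_{k-2,-F(k-1)}(n)$ for all $n\in\mathbb N$; (iii) $f_{k-3,1-F(k)}(b(n))+1=f_{k-3,-F(k-2)}(b(n)+1)$ for all $n\in\mathbb N$; (iv) $f_{k-2,1-F(k)}(n)+1=f_{k-3,-F(k-2)}(a(n)+1)$ for all $n\in\mathbb N$.
   Context: $\mathbb N=\{1,2,\dots\}$, $\varphi=\frac{1+\sqrt5}{2}$, $a(n)=\lfloor n\varphi\rfloor$, $b(n)=\lfloor n\varphi^2\rfloor$. $F$ is the Fibonacci sequence with $F(0)=0$, $F(1)=F(2)=1$, $F(n)=F(n-1)+F(n-2)$. For $i\in\mathbb Z^{\geq 0}$ and $j\in\mathbb Z$, $f_{i,j}(n)=F(i+1)a(n)+F(i)n-j$ for $n\in\mathbb N$ (the sequences $f_{i,j}$ are only defined for $i\ge 0$). *)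

theory Defs
  imports Complex_Main "HOL-Number_Theory.Fib"
begin

definition phi :: real where "phi = (1 + sqrt 5) / 2"

definition a :: "nat \<Rightarrow> nat" where "a n = nat \<lfloor>real n * phi\<rfloor>"
definition b :: "nat \<Rightarrow> nat" where "b n = nat \<lfloor>real n * phi ^ 2\<rfloor>"

text \<open>f_{i,j}(n) = F(i+1) a(n) + F(i) n - j, with F = fib (fib 0 = 0, fib 1 = 1).\<close>
definition f :: "nat \<Rightarrow> int \<Rightarrow> nat \<Rightarrow> int" where
  "f i j n = int (fib (i + 1)) * int (a n) + int (fib i) * int n - j"

end

theory Submission
  imports Defs "HOL-Computational_Algebra.Primes"
begin

lemma sq5_nat: "(k::nat)^2 = 5*n^2 \<Longrightarrow> n = 0"
proof (induction n arbitrary: k rule: less_induct)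
  case (less n)
  have p5: "prime (5::nat)"
  proof -
    have e: "{2..<5::nat} = {2,3,4}" by auto
    show ?thesis unfolding prime_nat_iff' e by simp
  qed
  have "5 dvd k^2" using less.prems by simp
  then have "5 dvd k" using p5 prime_dvd_power by blast
  then obtain c where c: "k = 5*c" by blast
  then have "n^2 = 5*c^2" using less.prems by (simp add: power_mult_distrib)
  then have "5 dvd n^2" by simp
  then have "5 dvd n" using p5 prime_dvd_power by blast
  then obtain d where d: "n = 5*d" by blast
  have "c^2 = 5*d^2" using \<open>n^2 = 5*c^2\<close> d by (simp add: power_mult_distrib)
  show "n = 0"
  proof (rule ccontr)
    assume "n \<noteq> 0"
    then have "d < n" using d by simp
    from less.IH[OF this \<open>c^2 = 5*d^2\<close>] have "d = 0" .
    then show False using d \<open>n \<noteq> 0\<close> by simp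
  qed
qed

lemma sqrt5_bounds: "2 < sqrt (5::real)" "sqrt (5::real) < 3"
proof -
  show "2 < sqrt (5::real)" by (rule real_less_rsqrt) simp
  show "sqrt (5::real) < 3" by (rule real_sqrt_less_iff[THEN iffD2, of 5 9, simplified]) 
qed

lemma phi_bounds: "1 < phi" "phi < 2"
  using sqrt5_bounds by (auto simp: phi_def)

lemma phi_sq: "phi^2 = phi + 1"
  by (simp add: phi_def power2_eq_square field_simps)

lemma phi_irr:
  assumes "n \<ge> 1" shows "real n * phi \<noteq> of_int m"
proof
  assume h: "real n * phi = of_int m"
  have sq: "sqrt 5 = 2 * phi - 1" unfolding phi_def by (simp add: field_simps)
  have "real n * sqrt 5 = 2 * (real n * phi) - real n" by (subst sq) (simp add: algebra_simps)
  then have s: "real n * sqrt 5 = 2 * of_int m - real n" using h by simp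
  have "0 \<le> real n * sqrt 5" by simp
  then have nn: "0 \<le> 2*m - int n" using s by linarith
  have "(real n * sqrt 5)^2 = 5 * (real n)^2" by (simp add: power_mult_distrib)
  then have "(real_of_int (2*m - int n))^2 = 5 * (real n)^2" using s by simp
  then have "(2*m - int n)^2 = 5 * (int n)^2"
    by (metis (mono_tags) of_int_eq_iff of_int_mult of_int_numeral of_int_of_nat_eq of_int_power)
  then have "(nat (2*m - int n))^2 = 5 * n^2" using nn
    by (metis (mono_tags) int_nat_eq nat_int nat_numeral nat_power_eq nat_times_as_int of_nat_0_le_iff of_nat_power zero_le_numeral)
  then have "n = 0" by (rule sq5_nat)
  then show False using assms by simp
qed

lemma a_real: "real (a n) = of_int \<lfloor>real n * phi\<rfloor>"
proof -
  have "0 \<le> real n * phi" using phi_bounds by simp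
  then show ?thesis by (simp add: a_def)
qed

lemma b_eq: "b n = a n + n"
proof -
  have "real n * phi^2 = real n * phi + of_int (int n)" by (simp add: phi_sq algebra_simps)
  then have "\<lfloor>real n * phi^2\<rfloor> = \<lfloor>real n * phi\<rfloor> + int n" by simp
  moreover have "0 \<le> \<lfloor>real n * phi\<rfloor>" using phi_bounds by simp
  ultimately show ?thesis by (simp add: a_def b_def nat_add_distrib)
qed

lemma key:
  assumes "n \<ge> 1"
  shows "a (a n) = a n + n - 1 \<and> a (a n + 1) = a n + n + 1 \<and>
         a (b n) = 2 * a n + n \<and> a (b n + 1) = 2 * a n + n + 1"
proof -
  define A where "A = \<lfloor>real n * phi\<rfloor>"
  define e where "e = real n * phi - of_int A"
  have e0: "0 \<le> e" "e < 1" unfolding e_def A_def by linarith+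
  have "e \<noteq> 0" using phi_irr[OF assms, of A] unfolding e_def by simp
  with e0 have epos: "0 < e" by simp
  have Ar: "real (a n) = of_int A" using a_real A_def by simp
  have A0: "0 \<le> A" using phi_bounds A_def by simp
  have aA: "a n = nat A" using Ar A0 by (metis nat_int of_int_of_nat_eq of_nat_eq_iff int_nat_eq)
  have ph: "phi * phi = phi + 1" using phi_sq by (simp add: power2_eq_square)
  have "real (a n) * phi = (real n * phi - e) * phi" using Ar e_def by simp
  also have "\<dots> = real n * (phi * phi) - e * phi" by (simp add: algebra_simps)
  also have "\<dots> = real n * phi + real n - e * phi" using ph by (simp add: algebra_simps)
  finally have x0: "real (a n) * phi = real n * phi + real n - e * phi" .
  have "e * (phi - 1) = e * phi - e" by (simp add: algebra_simps)
  then have x1: "real (a n) * phi = of_int (A + int n) - e * (phi - 1)"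
    using e_def x0 by simp
  have bn: "real (b n) * phi = real (a n) * phi + real n * phi" using b_eq by (simp add: algebra_simps)
  have x3: "real (b n) * phi = of_int (2*A + int n) + e * (2 - phi)"
  proof -
    have "e * (2 - phi) = 2 * e - e * phi" "e * (phi - 1) = e * phi - e" by (simp_all add: algebra_simps)
    then show ?thesis using bn x1 e_def by simp
  qed
  have p1: "0 < phi - 1" "phi - 1 < 1" "0 < 2 - phi" "2 - phi < 1" using phi_bounds by auto
  have m1: "0 < e * (phi - 1)" using epos p1 by simp
  have m2: "e * (phi - 1) < 1" using mult_strict_mono[OF e0(2) p1(2)] e0 p1 by simp
  have m3: "0 \<le> (1 - e) * (phi - 1)" using e0 p1 by simp
  have m4: "(1 - e) * (phi - 1) < 1"
    using mult_le_less_imp_less[of "1-e" 1 "phi - 1" 1] e0 p1 by simp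
  have m5: "0 \<le> e * (2 - phi)" using e0 p1 by simp
  have m6: "e * (2 - phi) < 2 - phi" using mult_strict_right_mono[OF e0(2) p1(3)] by simp
  have m7: "e * (2 - phi) < 1" using m6 p1 by linarith
  have f1: "\<lfloor>real (a n) * phi\<rfloor> = A + int n - 1"
    unfolding x1 using m1 m2 by (intro floor_unique) auto
  have f2: "\<lfloor>real (a n + 1) * phi\<rfloor> = A + int n + 1"
  proof -
    have "real (a n + 1) * phi = of_int (A + int n + 1) + (1 - e) * (phi - 1)"
      using x1 by (simp add: algebra_simps)
    then show ?thesis using m3 m4 by (intro floor_unique) auto
  qed
  have f3: "\<lfloor>real (b n) * phi\<rfloor> = 2*A + int n"
    unfolding x3 using m5 m7 by (intro floor_unique) auto
  have f4: "\<lfloor>real (b n + 1) * phi\<rfloor> = 2*A + int n + 1"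
  proof -
    have "real (b n + 1) * phi = of_int (2*A + int n + 1) + (e * (2 - phi) + (phi - 1))"
      using x3 by (simp add: algebra_simps)
    then show ?thesis using m5 m6 p1 by (intro floor_unique; linarith)
  qed
  show ?thesis using f1 f2 f3 f4 aA A0 assms unfolding a_def[of "a n"] a_def[of "a n + 1"] a_def[of "b n"] a_def[of "b n + 1"]
    by auto
qed

theorem theorem3p8:
  fixes k :: nat
  assumes "k \<ge> 3"
  shows "(\<forall>n i j. n \<ge> 1 \<longrightarrow> k - 3 \<le> i \<longrightarrow> i \<le> k - 2 \<longrightarrow>
            - int (fib (i + 1)) \<ge> j \<longrightarrow> j \<ge> 2 - int (fib k) \<longrightarrow>
            f i j n + 1 = f i (j - 1) n)
       \<and> (\<forall>n. n \<ge> 1 \<longrightarrow>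
            f (k - 3) (1 - int (fib k)) (a n) + 1 = f (k - 2) (- int (fib (k - 1))) n)
       \<and> (\<forall>n. n \<ge> 1 \<longrightarrow>
            f (k - 3) (1 - int (fib k)) (b n) + 1 = f (k - 3) (- int (fib (k - 2))) (b n + 1))
       \<and> (\<forall>n. n \<ge> 1 \<longrightarrow>
            f (k - 2) (1 - int (fib k)) n + 1 = f (k - 3) (- int (fib (k - 2))) (a n + 1))"
proof -
  obtain m where km: "k = m + 3" using assms by (metis add.commute le_Suc_ex)
  have k1: "k - 3 = m" "k - 2 = m + 1" "k - 1 = m + 2" using km by auto
  have F2: "int (fib (m + 2)) = int (fib (m + 1)) + int (fib m)"
    by (simp add: numeral_2_eq_2)
  have F3: "int (fib k) = int (fib (m + 2)) + int (fib (m + 1))"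
    using km by (simp add: numeral_3_eq_3 numeral_2_eq_2)
  have P1: "\<forall>n i j. n \<ge> 1 \<longrightarrow> k - 3 \<le> i \<longrightarrow> i \<le> k - 2 \<longrightarrow>
            - int (fib (i + 1)) \<ge> j \<longrightarrow> j \<ge> 2 - int (fib k) \<longrightarrow>
            f i j n + 1 = f i (j - 1) n" by (simp add: f_def)
  have P2: "\<forall>n. n \<ge> 1 \<longrightarrow>
            f (k - 3) (1 - int (fib k)) (a n) + 1 = f (k - 2) (- int (fib (k - 1))) n"
  proof (intro allI impI)
    fix n :: nat assume n: "n \<ge> 1"
    have "a (a n) = a n + n - 1" using key[OF n] by blast
    then have e: "int (a (a n)) = int (a n) + int n - 1" using n by simp
    show "f (k - 3) (1 - int (fib k)) (a n) + 1 = f (k - 2) (- int (fib (k - 1))) n"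
      unfolding f_def k1 e F3 using F2 by (simp add: algebra_simps)
  qed
  have P3: "\<forall>n. n \<ge> 1 \<longrightarrow>
            f (k - 3) (1 - int (fib k)) (b n) + 1 = f (k - 3) (- int (fib (k - 2))) (b n + 1)"
  proof (intro allI impI)
    fix n :: nat assume n: "n \<ge> 1"
    have "a (b n + 1) = a (b n) + 1" using key[OF n] by simp
    then have e: "int (a (b n + 1)) = int (a (b n)) + 1" by simp
    show "f (k - 3) (1 - int (fib k)) (b n) + 1 = f (k - 3) (- int (fib (k - 2))) (b n + 1)"
      unfolding f_def k1 e F3 using F2 by (simp add: algebra_simps)
  qed
  have P4: "\<forall>n. n \<ge> 1 \<longrightarrow>
            f (k - 2) (1 - int (fib k)) n + 1 = f (k - 3) (- int (fib (k - 2))) (a n + 1)"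
  proof (intro allI impI)
    fix n :: nat assume n: "n \<ge> 1"
    have "a (a n + 1) = a n + n + 1" using key[OF n] by blast
    then have e: "int (a (a n + 1)) = int (a n) + int n + 1" by simp
    show "f (k - 2) (1 - int (fib k)) n + 1 = f (k - 3) (- int (fib (k - 2))) (a n + 1)"
      unfolding f_def k1 e F3 using F2 by (simp add: algebra_simps)
  qed
  show ?thesis using P1 P2 P3 P4 by blast
qed

end
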